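(* Let $G\neq K_4$ be a connected, claw-free cubic graph all of whose units are triangle-units. Then there exists an independent set in $G$ that contains a vertex from every triangle of $G$.
   Context: A graph is claw-free if it has no induced subgraph isomorphic to $K_{1,3}$; it is cubic if every vertex has degree $3$. A diamond is an induced subgraph isomorphic to $K_4$ minus one edge. For a connected, claw-free, cubic graph $G\neq K_4$, the vertex set $V(G)$ can be uniquely partitioned into sets each of which induces a triangle or a diamond in $G$; the parts are called units, a triangle-unit being a part inducing a triangle and a diamond-unit a part inducing a diamond. *)

theory Defs
  imports Main
begin

definition simple_graph :: "'a set \<Rightarrow> ('a \<Rightarrow> 'a \<Rightarrow> bool) \<Rightarrow> bool" where
  "simple_graph V E \<longleftrightarrow> finite V \<and> (\<forall>x y. E x y \<longrightarrow> x \<in> V \<and> y \<in> V)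
     \<and> (\<forall>x y. E x y \<longrightarrow> E y x) \<and> (\<forall>x. \<not> E x x)"

definition connected_graph :: "'a set \<Rightarrow> ('a \<Rightarrow> 'a \<Rightarrow> bool) \<Rightarrow> bool" where
  "connected_graph V E \<longleftrightarrow> V \<noteq> {} \<and> (\<forall>x\<in>V. \<forall>y\<in>V. E\<^sup>*\<^sup>* x y)"

definition nbhd :: "'a set \<Rightarrow> ('a \<Rightarrow> 'a \<Rightarrow> bool) \<Rightarrow> 'a \<Rightarrow> 'a set" where
  "nbhd V E v = {u \<in> V. E v u}"

definition cubic :: "'a set \<Rightarrow> ('a \<Rightarrow> 'a \<Rightarrow> bool) \<Rightarrow> bool" where
  "cubic V E \<longleftrightarrow> (\<forall>v\<in>V. card (nbhd V E v) = 3)"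

definition claw_free :: "'a set \<Rightarrow> ('a \<Rightarrow> 'a \<Rightarrow> bool) \<Rightarrow> bool" where
  "claw_free V E \<longleftrightarrow> \<not> (\<exists>v\<in>V. \<exists>a b c. a \<in> nbhd V E v \<and> b \<in> nbhd V E v \<and> c \<in> nbhd V E v
      \<and> a \<noteq> b \<and> a \<noteq> c \<and> b \<noteq> c \<and> \<not> E a b \<and> \<not> E a c \<and> \<not> E b c)"

definition is_K4 :: "'a set \<Rightarrow> ('a \<Rightarrow> 'a \<Rightarrow> bool) \<Rightarrow> bool" where
  "is_K4 V E \<longleftrightarrow> card V = 4 \<and> (\<forall>x\<in>V. \<forall>y\<in>V. x \<noteq> y \<longrightarrow> E x y)"

definition induced_edges :: "('a \<Rightarrow> 'a \<Rightarrow> bool) \<Rightarrow> 'a set \<Rightarrow> 'a set set" where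
  "induced_edges E U = {{x, y} | x y. x \<in> U \<and> y \<in> U \<and> E x y}"

definition induces_triangle :: "('a \<Rightarrow> 'a \<Rightarrow> bool) \<Rightarrow> 'a set \<Rightarrow> bool" where
  "induces_triangle E U \<longleftrightarrow> card U = 3 \<and> (\<forall>x\<in>U. \<forall>y\<in>U. x \<noteq> y \<longrightarrow> E x y)"

text \<open>U induces a diamond, i.e. K4 minus one edge: 4 vertices, exactly 5 edges.\<close>
definition induces_diamond :: "('a \<Rightarrow> 'a \<Rightarrow> bool) \<Rightarrow> 'a set \<Rightarrow> bool" where
  "induces_diamond E U \<longleftrightarrow> card U = 4 \<and> card (induced_edges E U) = 5"

definition unit_partition :: "'a set \<Rightarrow> ('a \<Rightarrow> 'a \<Rightarrow> bool) \<Rightarrow> 'a set set \<Rightarrow> bool" where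
  "unit_partition V E P \<longleftrightarrow> \<Union>P = V \<and> (\<forall>A\<in>P. \<forall>B\<in>P. A \<noteq> B \<longrightarrow> A \<inter> B = {})
     \<and> (\<forall>U\<in>P. induces_triangle E U \<or> induces_diamond E U)"

definition independent_set :: "'a set \<Rightarrow> ('a \<Rightarrow> 'a \<Rightarrow> bool) \<Rightarrow> 'a set \<Rightarrow> bool" where
  "independent_set V E S \<longleftrightarrow> S \<subseteq> V \<and> (\<forall>x\<in>S. \<forall>y\<in>S. \<not> E x y)"

end

theory Submission
  imports Defs
begin

definition gd :: "('a \<Rightarrow> 'a \<Rightarrow> bool) \<Rightarrow> 'a \<Rightarrow> 'a \<Rightarrow> nat" where
  "gd R a b = (LEAST n. (R ^^ n) a b)"

lemma gd_path: "R\<^sup>*\<^sup>* a b \<Longrightarrow> (R ^^ gd R a b) a b"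
  unfolding gd_def by (metis LeastI_ex rtranclp_imp_relpowp)

lemma gd_le: "(R ^^ n) a b \<Longrightarrow> gd R a b \<le> n"
  unfolding gd_def by (rule Least_le)

lemma gd_pred:
  assumes "R\<^sup>*\<^sup>* a b" "a \<noteq> b"
  shows "\<exists>p. R\<^sup>*\<^sup>* a p \<and> R p b \<and> gd R a p < gd R a b"
proof -
  have h: "(R ^^ gd R a b) a b" using gd_path[OF assms(1)] .
  then obtain n where n: "gd R a b = Suc n"
    using assms(2) by (cases "gd R a b") auto
  with h have "(R ^^ Suc n) a b" by simp
  then obtain p where "(R ^^ n) a p" "R p b" by (rule relpowp_Suc_E)
  then show ?thesis using gd_le[of n R a p] n relpowp_imp_rtranclp by fastforce
qed

lemma avoid:
  assumes "\<And>x y. R x y \<Longrightarrow> x \<noteq> v \<Longrightarrow> y \<noteq> v \<Longrightarrow> R' x y"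
  shows "(R ^^ n) a u \<Longrightarrow> n < gd R a v \<Longrightarrow> (R' ^^ n) a u"
proof (induction n arbitrary: u)
  case 0
  then show ?case by simp
next
  case (Suc n)
  from Suc.prems(1) obtain w where w: "(R ^^ n) a w" "R w u" by (rule relpowp_Suc_E)
  have "w \<noteq> v" using gd_le[OF w(1)] Suc.prems(2) by auto
  moreover have "u \<noteq> v" using gd_le[OF Suc.prems(1)] Suc.prems(2) by auto
  ultimately have "R' w u" using assms w(2) by blast
  moreover have "(R' ^^ n) a w" using Suc.IH w(1) Suc.prems(2) by simp
  ultimately show ?case using relpowp_Suc_I by metis
qed

lemma rtranclp_sym:
  assumes "\<And>x y. R x y \<Longrightarrow> R y x"
  shows "R\<^sup>*\<^sup>* a b \<Longrightarrow> R\<^sup>*\<^sup>* b a"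
proof (induction rule: rtranclp_induct)
  case base
  then show ?case by simp
next
  case (step y z)
  then show ?case using assms by (meson converse_rtranclp_into_rtranclp)
qed

theorem lemma3p9:
  fixes V :: "'a set" and E :: "'a \<Rightarrow> 'a \<Rightarrow> bool"
  assumes "simple_graph V E"
    and "connected_graph V E"
    and "claw_free V E"
    and "cubic V E"
    and "\<not> is_K4 V E"
    and "\<exists>P. unit_partition V E P \<and> (\<forall>U\<in>P. induces_triangle E U)"
  shows "\<exists>S. independent_set V E S \<and>
           (\<forall>T. T \<subseteq> V \<and> induces_triangle E T \<longrightarrow> S \<inter> T \<noteq> {})"
proof -
  from assms(6) obtain P where up: "unit_partition V E P" and tri: "\<forall>U\<in>P. induces_triangle E U" by blast
  have fin: "finite V" and Ein: "\<And>x y. E x y \<Longrightarrow> x \<in> V \<and> y \<in> V"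
    and sym: "\<And>x y. E x y \<Longrightarrow> E y x" and irr: "\<And>x. \<not> E x x"
    using assms(1) unfolding simple_graph_def by auto
  have cov: "\<Union>P = V" and disj: "\<And>A B. A\<in>P \<Longrightarrow> B\<in>P \<Longrightarrow> A\<noteq>B \<Longrightarrow> A\<inter>B={}"
    using up unfolding unit_partition_def by auto
  have card3: "\<And>U. U\<in>P \<Longrightarrow> card U = 3"
    and adj: "\<And>U x y. U\<in>P \<Longrightarrow> x\<in>U \<Longrightarrow> y\<in>U \<Longrightarrow> x\<noteq>y \<Longrightarrow> E x y"
    using tri unfolding induces_triangle_def by auto
  have deg: "\<And>x. x\<in>V \<Longrightarrow> card (nbhd V E x) = 3" using assms(4) unfolding cubic_def by auto
  have unit_ex: "\<And>x. x\<in>V \<Longrightarrow> \<exists>U\<in>P. x\<in>U" using cov by auto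
  have unit_uniq: "\<And>U W x. U\<in>P \<Longrightarrow> W\<in>P \<Longrightarrow> x\<in>U \<Longrightarrow> x\<in>W \<Longrightarrow> U=W" using disj by blast
  have UV: "\<And>U. U\<in>P \<Longrightarrow> U \<subseteq> V" using cov by auto
  have finU: "\<And>U. U\<in>P \<Longrightarrow> finite U" using UV fin finite_subset by blast
  have finN: "\<And>x. finite (nbhd V E x)" using fin unfolding nbhd_def by auto
  have out_uniq: "a = b" if h: "U\<in>P" "x\<in>U" "E x a" "E x b" "a\<notin>U" "b\<notin>U" for U x a b
  proof (rule ccontr)
    assume ab: "a \<noteq> b"
    have sub: "insert a (insert b (U-{x})) \<subseteq> nbhd V E x"
      using h Ein adj UV unfolding nbhd_def by blast
    have "card (U - {x}) = 2" using card3[OF h(1)] h(2) finU[OF h(1)] by simp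
    then have "card (insert a (insert b (U-{x}))) = 4" using h ab finU[OF h(1)] by simp
    moreover have "card (insert a (insert b (U-{x}))) \<le> card (nbhd V E x)"
      by (rule card_mono[OF finN sub])
    ultimately show False using deg[of x] h UV by auto
  qed
  have out_ex: "\<exists>a. E x a \<and> a\<notin>U" if h: "U\<in>P" "x\<in>U" for U x
  proof (rule ccontr)
    assume "\<not> ?thesis"
    then have "nbhd V E x \<subseteq> U - {x}" using irr unfolding nbhd_def by auto
    then have "card (nbhd V E x) \<le> card (U - {x})" using finU[OF h(1)] by (simp add: card_mono)
    also have "\<dots> = 2" using card3[OF h(1)] h(2) finU[OF h(1)] by simp
    finally show False using deg[of x] h UV by auto
  qed
  have tri_unit: "T \<in> P" if h: "T \<subseteq> V" "induces_triangle E T" for T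
  proof -
    have cT: "card T = 3" and aT: "\<And>x y. x\<in>T \<Longrightarrow> y\<in>T \<Longrightarrow> x\<noteq>y \<Longrightarrow> E x y"
      using h(2) unfolding induces_triangle_def by auto
    obtain a b c where T: "T = {a,b,c}" "a\<noteq>b" "a\<noteq>c" "b\<noteq>c" using cT card_3_iff by metis
    obtain Ua where Ua: "Ua\<in>P" "a\<in>Ua" using unit_ex h T by auto
    have "T \<subseteq> Ua"
    proof (cases "b \<in> Ua")
      case True
      show ?thesis
      proof (cases "c \<in> Ua")
        case True
        then show ?thesis using \<open>b\<in>Ua\<close> Ua T by auto
      next
        case False
        obtain Uc where Uc: "Uc\<in>P" "c\<in>Uc" using unit_ex h T by auto
        have "Uc \<noteq> Ua" using False Uc by auto
        then have "a \<notin> Uc" "b \<notin> Uc" using disj Uc Ua True by auto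
        then have "a = b" using out_uniq[OF Uc, of a b] aT T by auto
        then show ?thesis using T by simp
      qed
    next
      case False
      show ?thesis
      proof (cases "c \<in> Ua")
        case True
        obtain Ub where Ub: "Ub\<in>P" "b\<in>Ub" using unit_ex h T by auto
        have "Ub \<noteq> Ua" using False Ub by auto
        then have "a \<notin> Ub" "c \<notin> Ub" using disj Ub Ua True by auto
        then have "a = c" using out_uniq[OF Ub, of a c] aT T by auto
        then show ?thesis using T by simp
      next
        case False
        then have "b = c" using out_uniq[OF Ua, of b c] aT T \<open>b \<notin> Ua\<close> by auto
        then show ?thesis using T by simp
      qed
    qed
    then have "T = Ua" using card_subset_eq[OF finU[OF Ua(1)]] cT card3[OF Ua(1)] by simp
    then show ?thesis using Ua by simp
  qed
  (* step 1: find a non-bridge outside edge v z *)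
  obtain x0 where x0: "x0 \<in> V" using assms(2) unfolding connected_graph_def by auto
  have conn: "\<And>x y. x\<in>V \<Longrightarrow> y\<in>V \<Longrightarrow> E\<^sup>*\<^sup>* x y" using assms(2) unfolding connected_graph_def by auto
  define D where "D = gd E x0"
  have Dpath: "\<And>u. u\<in>V \<Longrightarrow> (E ^^ D u) x0 u" unfolding D_def using conn x0 gd_path by metis
  have "finite (D ` V)" "D ` V \<noteq> {}" using fin x0 by auto
  then have "Max (D ` V) \<in> D ` V" by (rule Max_in)
  then obtain v where v: "v \<in> V" "D v = Max (D ` V)" by auto
  have vmax: "\<And>u. u\<in>V \<Longrightarrow> D u \<le> D v" using v fin by simp
  obtain Uv where Uv: "Uv\<in>P" "v\<in>Uv" using unit_ex v by auto
  obtain z where z: "E v z" "z\<notin>Uv" using out_ex[OF Uv] by auto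
  define E' where "E' = (\<lambda>a b. E a b \<and> \<not>(a=v \<and> b=z) \<and> \<not>(a=z \<and> b=v))"
  have E'E: "\<And>a b. E' a b \<Longrightarrow> E a b" unfolding E'_def by simp
  have E'sym: "\<And>a b. E' a b \<Longrightarrow> E' b a" unfolding E'_def using sym by blast
  have lowconn: "E'\<^sup>*\<^sup>* x0 u" if "u\<in>V" "D u < D v" for u
  proof -
    have "(E' ^^ D u) x0 u"
      by (rule avoid[where R=E and v=v]) (use Dpath that D_def E'_def in auto)
    then show ?thesis by (rule relpowp_imp_rtranclp)
  qed
  have Bconn: "E'\<^sup>*\<^sup>* x0 u" if u: "u\<in>V" "u\<noteq>v" for u
  proof (cases "D u < D v")
    case True
    then show ?thesis using lowconn u by simp
  next
    case False
    then have eq: "D u = D v" using vmax u by force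
    show ?thesis
    proof (cases "u = x0")
      case True
      then have "D v = 0" using eq gd_le[of 0 E x0 x0] D_def by simp
      then have "v = x0" using Dpath[OF v(1)] by auto
      then show ?thesis using True u by simp
    next
      case False
      obtain p where p: "E\<^sup>*\<^sup>* x0 p" "E p u" "D p < D u"
        using gd_pred[OF conn[OF x0 u(1)] False[symmetric]] D_def by auto
      have "E'\<^sup>*\<^sup>* x0 p" using lowconn[of p] p eq Ein by auto
      moreover have "p \<noteq> v" using p eq by auto
      then have "E' p u" using p u unfolding E'_def by auto
      ultimately show ?thesis by simp
    qed
  qed
  obtain m where m: "m \<in> Uv" "m \<noteq> v"
  proof -
    have "card (Uv - {v}) = 2" using card3[OF Uv(1)] Uv finU by simp
    then have "Uv - {v} \<noteq> {}" by (metis card.empty zero_neq_numeral)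
    then show ?thesis using that by auto
  qed
  have "m \<noteq> z" using m z by auto
  then have "E' m v" using adj[OF Uv(1) m(1) Uv(2) m(2)] m unfolding E'_def by auto
  moreover have "E'\<^sup>*\<^sup>* x0 m" using Bconn m UV Uv by auto
  ultimately have vconn: "E'\<^sup>*\<^sup>* x0 v" by simp
  have conn': "E'\<^sup>*\<^sup>* v u" if "u \<in> V" for u
  proof -
    have "E'\<^sup>*\<^sup>* x0 u" using that Bconn vconn by (cases "u = v") auto
    moreover have "E'\<^sup>*\<^sup>* v x0" using rtranclp_sym[OF E'sym vconn] by blast
    ultimately show ?thesis by simp
  qed
  define D' where "D' = gd E' v"
  define pick where "pick W = (SOME w. w\<in>W \<and> (\<forall>w'\<in>W. D' w \<le> D' w'))" for W
  have pick: "pick W \<in> W \<and> (\<forall>w'\<in>W. D' (pick W) \<le> D' w')" if "W \<in> P" for W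
  proof -
    have "W \<noteq> {}" using card3[OF that] by auto
    then obtain k where "k \<in> W" by auto
    then have "\<exists>w. w\<in>W \<and> (\<forall>w'\<in>W. D' w \<le> D' w')"
      using ex_has_least_nat[of "\<lambda>x. x \<in> W" k D'] by auto
    then show ?thesis unfolding pick_def by (rule someI_ex)
  qed
  have pred: "\<exists>p. E' p (pick W) \<and> p \<notin> W \<and> D' p < D' (pick W)" if W: "W\<in>P" "W\<noteq>Uv" for W
  proof -
    have pw: "pick W \<in> W" using pick W by auto
    have "pick W \<noteq> v" using pw Uv W disj by blast
    then obtain p where p: "E'\<^sup>*\<^sup>* v p" "E' p (pick W)" "D' p < D' (pick W)"
      using gd_pred[OF conn'[of "pick W"]] pw UV W D'_def by fastforce
    have "p \<notin> W" using p(3) pick[OF W(1)] by force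
    then show ?thesis using p by blast
  qed
  have noV: "\<not> E v (pick W)" if W: "W\<in>P" "W\<noteq>Uv" for W
  proof
    assume e: "E v (pick W)"
    have pw: "pick W \<in> W" using pick W by auto
    obtain p where p: "E' p (pick W)" "p \<notin> W" using pred[OF W] by blast
    have "v \<notin> W" using Uv W disj by blast
    then have "p = v" using out_uniq[OF W(1) pw, of p v] p E'E sym e by blast
    moreover have "pick W \<notin> Uv" using pw Uv W disj by blast
    then have "pick W = z" using out_uniq[OF Uv, of "pick W" z] e z by blast
    ultimately show False using p unfolding E'_def by simp
  qed
  have PP: "D' (pick W2) < D' (pick W1)"
    if W: "W1\<in>P" "W1\<noteq>Uv" "W2\<in>P" "W2 \<noteq> W1" and e: "E (pick W1) (pick W2)" for W1 W2
  proof -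
    have pw: "pick W1 \<in> W1" "pick W2 \<in> W2" using pick W by auto
    obtain p where p: "E' p (pick W1)" "p \<notin> W1" "D' p < D' (pick W1)" using pred[OF W(1,2)] by blast
    have "pick W2 \<notin> W1" using pw W disj by blast
    then have "p = pick W2" using out_uniq[OF W(1) pw(1), of p "pick W2"] p E'E sym e by blast
    then show ?thesis using p by simp
  qed
  define S where "S = insert v (pick ` (P - {Uv}))"
  have indep: "independent_set V E S"
    unfolding independent_set_def
  proof
    show "S \<subseteq> V" unfolding S_def using v pick UV by blast
    show "\<forall>x\<in>S. \<forall>y\<in>S. \<not> E x y"
    proof (intro ballI notI)
      fix x y assume xy: "x \<in> S" "y \<in> S" "E x y"
      show False
      proof (cases "x = v")
        case True
        then show ?thesis using xy noV irr unfolding S_def by auto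
      next
        case False
        then obtain W1 where W1: "W1 \<in> P" "W1 \<noteq> Uv" "x = pick W1" using xy unfolding S_def by auto
        show ?thesis
        proof (cases "y = v")
          case True
          then show ?thesis using xy W1 noV sym by blast
        next
          case False
          then obtain W2 where W2: "W2 \<in> P" "W2 \<noteq> Uv" "y = pick W2" using xy unfolding S_def by auto
          show ?thesis
          proof (cases "W1 = W2")
            case True
            then show ?thesis using xy W1 W2 irr by simp
          next
            case False
            have "D' y < D' x" using PP[OF W1(1,2) W2(1)] False xy W1 W2 by auto
            moreover have "D' x < D' y" using PP[OF W2(1,2) W1(1)] False xy W1 W2 sym by auto
            ultimately show False by simp
          qed
        qed
      qed
    qed
  qed
  have hit: "\<forall>T. T \<subseteq> V \<and> induces_triangle E T \<longrightarrow> S \<inter> T \<noteq> {}"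
  proof (intro allI impI)
    fix T assume T: "T \<subseteq> V \<and> induces_triangle E T"
    then have TP: "T \<in> P" using tri_unit by blast
    show "S \<inter> T \<noteq> {}"
    proof (cases "T = Uv")
      case True
      then show ?thesis using Uv unfolding S_def by auto
    next
      case False
      then have "pick T \<in> S" "pick T \<in> T" using TP pick unfolding S_def by auto
      then show ?thesis by auto
    qed
  qed
  show ?thesis using indep hit by blast
qed

end
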